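(* Let $\vec S_n(t),\bar{\vec S}_n(t)\in\mathbb{C}^m$, $v_n(t)$ ($n\in\mathbb{Z}$) satisfy the discrete multicomponent Yajima--Oikawa system \begin{align*} \mathrm{i}\,\vec S_{n,t}&=v_n(\vec S_{n+1}+\vec S_{n-1})-c\,\vec S_n,\\ \mathrm{i}\,\bar{\vec S}_{n,t}&=-v_n(\bar{\vec S}_{n+1}+\bar{\vec S}_{n-1})+c\,\bar{\vec S}_n,\\ v_{n,t}&=\tfrac12 v_n\,\Delta_n^+\big(\langle\vec S_n,\bar{\vec S}_{n-1}\rangle+\langle\vec S_{n-1},\bar{\vec S}_n\rangle\big). \end{align*} Define scalars $F_n^{(j)}$ and vectors $\vec G_n^{(j)},\vec H_n^{(j)}$ ($j\ge0$) recursively by $F_n^{(0)}=1$ and \begin{align*} F_n^{(j)}&=v_nv_{n+1}\sum_{k=0}^{j-2}F_n^{(k)}F_{n+1}^{(j-k-2)}+\langle\vec S_n,\vec G_n^{(j-1)}\rangle+\langle\vec H_n^{(j-1)},\bar{\vec S}_n\rangle\quad(j\ge1),\\ \vec G_n^{(j)}&=-\tfrac{\mathrm{i}}{2}F_n^{(j)}\bar{\vec S}_{n+1}+v_{n+1}\sum_{k=0}^{j-1}F_n^{(k)}\vec G_{n+1}^{(j-k-1)}-\tfrac{\mathrm{i}}{2}v_{n+1}\sum_{k=0}^{j-1}F_n^{(k)}F_{n+1}^{(j-k-1)}\bar{\vec S}_n,\\ \vec H_n^{(j)}&=-\tfrac{\mathrm{i}}{2}F_n^{(j)}\vec S_{n+1}-v_{n+1}\sum_{k=0}^{j-1}F_n^{(k)}\vec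 H_{n+1}^{(j-k-1)}+\tfrac{\mathrm{i}}{2}v_{n+1}\sum_{k=0}^{j-1}F_n^{(k)}F_{n+1}^{(j-k-1)}\vec S_n, \end{align*} (empty sums are zero). Then the system possesses infinitely many conservation laws, obtained by comparing coefficients of each power of $1/\lambda$ on both sides of the formal power series identity \[ \Big[\log v_n+\log\Big(1+\sum_{j=1}^\infty\lambda^{-j}F_n^{(j)}\Big)\Big]_t=\Delta_n^+\Big[-\frac{\mathrm{i}}{\lambda}v_{n-1}v_n\Big(1+\sum_{j=1}^\infty\lambda^{-j}F_n^{(j)}\Big)-\mathrm{i}\lambda\frac{1}{1+\sum_{j=1}^\infty\lambda^{-j}F_{n-1}^{(j)}}\Big], \] where $\log(1+x)$ and $1/(1+x)$ are expanded as formal power series in $1/\lambda$.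
   Context: $\langle\vec a,\vec b\rangle=\sum_i a^{(i)}b^{(i)}$ is the bilinear scalar product (no conjugation); $\Delta_n^+f_n:=f_{n+1}-f_n$; $c$ is an arbitrary constant; $\bar{\vec S}_n$ is an independent vector variable. A conservation law is an identity of the form $(\rho_n)_t=\Delta_n^+ J_n$ with $\rho_n,J_n$ local functions of the dependent variables. *)

theory Defs
  imports "HOL-Analysis.Analysis" "HOL-Computational_Algebra.Formal_Laurent_Series"
begin

definition bip :: "complex^'m \<Rightarrow> complex^'m \<Rightarrow> complex" where
  "bip a b = (\<Sum>k\<in>UNIV. a $ k * b $ k)"

text \<open>The triple (F_n^(j), G_n^(j), H_n^(j)) for fixed time, given the lattice
  fields S, Sb (= bar S) and v as functions of the site n.\<close>
fun fgh :: "(int \<Rightarrow> complex^'m) \<Rightarrow> (int \<Rightarrow> complex^'m) \<Rightarrow> (int \<Rightarrow> complex)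
             \<Rightarrow> nat \<Rightarrow> int \<Rightarrow> complex \<times> (complex^'m) \<times> (complex^'m)" where
  "fgh S Sb v j n =
    (let Fj = (if j = 0 then 1 else
                 v n * v (n+1) * (\<Sum>k<j-1. fst (fgh S Sb v k n) * fst (fgh S Sb v (j-k-2) (n+1)))
                 + bip (S n) (fst (snd (fgh S Sb v (j-1) n)))
                 + bip (snd (snd (fgh S Sb v (j-1) n))) (Sb n));
         Gj = (- \<i>/2 * Fj) *s Sb (n+1)
              + v (n+1) *s (\<Sum>k<j. fst (fgh S Sb v k n) *s fst (snd (fgh S Sb v (j-k-1) (n+1))))
              - (\<i>/2 * v (n+1) * (\<Sum>k<j. fst (fgh S Sb v k n) * fst (fgh S Sb v (j-k-1) (n+1)))) *s Sb n;
         Hj = (- \<i>/2 * Fj) *s S (n+1)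
              - v (n+1) *s (\<Sum>k<j. fst (fgh S Sb v k n) *s snd (snd (fgh S Sb v (j-k-1) (n+1))))
              + (\<i>/2 * v (n+1) * (\<Sum>k<j. fst (fgh S Sb v k n) * fst (fgh S Sb v (j-k-1) (n+1)))) *s S n
     in (Fj, Gj, Hj))"

definition Fc :: "(int \<Rightarrow> complex^'m) \<Rightarrow> (int \<Rightarrow> complex^'m) \<Rightarrow> (int \<Rightarrow> complex) \<Rightarrow> nat \<Rightarrow> int \<Rightarrow> complex"
  where "Fc S Sb v j n = fst (fgh S Sb v j n)"
definition Gc :: "(int \<Rightarrow> complex^'m) \<Rightarrow> (int \<Rightarrow> complex^'m) \<Rightarrow> (int \<Rightarrow> complex) \<Rightarrow> nat \<Rightarrow> int \<Rightarrow> complex^'m"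
  where "Gc S Sb v j n = fst (snd (fgh S Sb v j n))"
definition Hc :: "(int \<Rightarrow> complex^'m) \<Rightarrow> (int \<Rightarrow> complex^'m) \<Rightarrow> (int \<Rightarrow> complex) \<Rightarrow> nat \<Rightarrow> int \<Rightarrow> complex^'m"
  where "Hc S Sb v j n = snd (snd (fgh S Sb v j n))"

text \<open>Generating series 1 + sum_{j>=1} mu^j F_n^(j), in the variable mu = 1/lambda.\<close>
definition Pser :: "(int \<Rightarrow> complex^'m) \<Rightarrow> (int \<Rightarrow> complex^'m) \<Rightarrow> (int \<Rightarrow> complex) \<Rightarrow> int \<Rightarrow> complex fps"
  where "Pser S Sb v n = Abs_fps (\<lambda>j. Fc S Sb v j n)"

definition logP :: "(int \<Rightarrow> complex^'m) \<Rightarrow> (int \<Rightarrow> complex^'m) \<Rightarrow> (int \<Rightarrow> complex) \<Rightarrow> int \<Rightarrow> complex fps"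
  where "logP S Sb v n = fps_ln 1 oo (Pser S Sb v n - 1)"

definition Jser :: "(int \<Rightarrow> complex^'m) \<Rightarrow> (int \<Rightarrow> complex^'m) \<Rightarrow> (int \<Rightarrow> complex) \<Rightarrow> int \<Rightarrow> complex fls"
  where "Jser S Sb v n =
     fls_const (- \<i> * v (n-1) * v n) * fls_X * fps_to_fls (Pser S Sb v n)
     - fls_const \<i> * fls_X_inv * fps_to_fls (inverse (Pser S Sb v (n-1)))"

end

theory Submission
  imports Defs
begin



lemma Fc_eq: "Fc S Sb v j n = (if j = 0 then 1 else
                 v n * v (n+1) * (\<Sum>k<j-1. Fc S Sb v k n * Fc S Sb v (j-k-2) (n+1))
                 + bip (S n) (Gc S Sb v (j-1) n)
                 + bip (Hc S Sb v (j-1) n) (Sb n))"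
  unfolding Fc_def Gc_def Hc_def by (simp only: fgh.simps[of S Sb v j n] Let_def fst_conv snd_conv)

lemma Gc_eq: "Gc S Sb v j n = (- \<i>/2 * Fc S Sb v j n) *s Sb (n+1)
              + v (n+1) *s (\<Sum>k<j. Fc S Sb v k n *s Gc S Sb v (j-k-1) (n+1))
              - (\<i>/2 * v (n+1) * (\<Sum>k<j. Fc S Sb v k n * Fc S Sb v (j-k-1) (n+1))) *s Sb n"
  unfolding Fc_def Gc_def Hc_def by (simp only: fgh.simps[of S Sb v j n] Let_def fst_conv snd_conv)

lemma Hc_eq: "Hc S Sb v j n = (- \<i>/2 * Fc S Sb v j n) *s S (n+1)
              - v (n+1) *s (\<Sum>k<j. Fc S Sb v k n *s Hc S Sb v (j-k-1) (n+1))
              + (\<i>/2 * v (n+1) * (\<Sum>k<j. Fc S Sb v k n * Fc S Sb v (j-k-1) (n+1))) *s S n"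
  unfolding Fc_def Gc_def Hc_def by (simp only: fgh.simps[of S Sb v j n] Let_def fst_conv snd_conv)

definition Gs where "Gs S Sb v n k = Abs_fps (\<lambda>j. Gc S Sb v j n $ k)"
definition Hs where "Hs S Sb v n k = Abs_fps (\<lambda>j. Hc S Sb v j n $ k)"
definition BG where "BG S Sb v n = (\<Sum>k\<in>UNIV. fps_const (S n $ k) * Gs S Sb v n k + Hs S Sb v n k * fps_const (Sb n $ k))"

lemma Xprod_nth: "(fps_X * (A * B :: complex fps)) $ j = (\<Sum>k<j. A$k * B$(j-k-1))"
proof (cases j)
  case (Suc l)
  have "(fps_X * (A * B)) $ j = (\<Sum>i=0..l. A$i * B$(l-i))" unfolding fps_X_mult_nth by (simp add: Suc fps_mult_nth)
  also have "\<dots> = (\<Sum>k<j. A$k * B$(j-k-1))" unfolding Suc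
    by (rule sum.cong) auto
  finally show ?thesis .
qed (simp only: fps_X_mult_nth, simp)

lemma Xc_nth: "(fps_X * (fps_const c * A :: complex fps)) $ j = c * (fps_X * A) $ j"
  unfolding fps_X_mult_nth by simp

lemma R1: "Pser S Sb v n = 1 + fps_X * (fps_X * (fps_const (v n * v (n+1)) * (Pser S Sb v n * Pser S Sb v (n+1))) + BG S Sb v n)"
proof (rule fps_ext)
  fix j show "Pser S Sb v n $ j = (1 + fps_X * (fps_X * (fps_const (v n * v (n+1)) * (Pser S Sb v n * Pser S Sb v (n+1))) + BG S Sb v n)) $ j"
  proof (cases j)
    case 0 then show ?thesis by (simp add: Pser_def Fc_eq)
  next
    case (Suc i)
    have "(fps_X * (fps_const (v n * v (n+1)) * (Pser S Sb v n * Pser S Sb v (n+1)))) $ i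
         = v n * v (n+1) * (\<Sum>k<i. Fc S Sb v k n * Fc S Sb v (i-k-1) (n+1))"
      unfolding Xc_nth unfolding Xprod_nth by (simp add: Pser_def)
    moreover have "BG S Sb v n $ i = bip (S n) (Gc S Sb v i n) + bip (Hc S Sb v i n) (Sb n)"
      by (simp add: BG_def fps_sum_nth bip_def Gs_def Hs_def sum.distrib)
    ultimately show ?thesis using Suc by (simp add: Pser_def Fc_eq[of S Sb v "Suc i"])
  qed
qed

lemma R2: "Gs S Sb v n i = fps_const (- \<i>/2 * Sb (n+1) $ i) * Pser S Sb v n
    + fps_X * (fps_const (v (n+1)) * (Pser S Sb v n * Gs S Sb v (n+1) i))
    - fps_X * (fps_const (\<i>/2 * v (n+1) * Sb n $ i) * (Pser S Sb v n * Pser S Sb v (n+1)))"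
proof (rule fps_ext)
  fix j
  show "Gs S Sb v n i $ j = (fps_const (- \<i>/2 * Sb (n+1) $ i) * Pser S Sb v n
    + fps_X * (fps_const (v (n+1)) * (Pser S Sb v n * Gs S Sb v (n+1) i))
    - fps_X * (fps_const (\<i>/2 * v (n+1) * Sb n $ i) * (Pser S Sb v n * Pser S Sb v (n+1)))) $ j"
    unfolding fps_add_nth fps_sub_nth Xc_nth unfolding Xprod_nth
    by (simp add: Gs_def Pser_def Gc_eq[of S Sb v j n] sum_component mult_ac sum_distrib_left)
qed

lemma R3: "Hs S Sb v n i = fps_const (- \<i>/2 * S (n+1) $ i) * Pser S Sb v n
    - fps_X * (fps_const (v (n+1)) * (Pser S Sb v n * Hs S Sb v (n+1) i))
    + fps_X * (fps_const (\<i>/2 * v (n+1) * S n $ i) * (Pser S Sb v n * Pser S Sb v (n+1)))"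
proof (rule fps_ext)
  fix j
  show "Hs S Sb v n i $ j = (fps_const (- \<i>/2 * S (n+1) $ i) * Pser S Sb v n
    - fps_X * (fps_const (v (n+1)) * (Pser S Sb v n * Hs S Sb v (n+1) i))
    + fps_X * (fps_const (\<i>/2 * v (n+1) * S n $ i) * (Pser S Sb v n * Pser S Sb v (n+1)))) $ j"
    unfolding fps_add_nth fps_sub_nth Xc_nth unfolding Xprod_nth
    by (simp add: Hs_def Pser_def Hc_eq[of S Sb v j n] sum_component mult_ac sum_distrib_left)
qed



definition sd :: "nat \<Rightarrow> (real \<Rightarrow> complex fps) \<Rightarrow> complex fps \<Rightarrow> real \<Rightarrow> bool" where
  "sd N A A' t \<longleftrightarrow> (\<forall>j<N. ((\<lambda>s. A s $ j) has_vector_derivative A' $ j) (at t))"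

lemma sd_mono: "sd N A A' t \<Longrightarrow> M \<le> N \<Longrightarrow> sd M A A' t"
  unfolding sd_def by auto

lemma sd_0: "sd 0 A A' t" unfolding sd_def by auto

lemma sd_cong: "sd N A A' t \<Longrightarrow> (\<And>s. A s = B s) \<Longrightarrow> A' = B' \<Longrightarrow> sd N B B' t"
  unfolding sd_def by simp

lemma sd_add: "sd N A A' t \<Longrightarrow> sd N B B' t \<Longrightarrow> sd N (\<lambda>s. A s + B s) (A' + B') t"
  unfolding sd_def by (auto intro!: derivative_eq_intros)

lemma sd_diff: "sd N A A' t \<Longrightarrow> sd N B B' t \<Longrightarrow> sd N (\<lambda>s. A s - B s) (A' - B') t"
  unfolding sd_def by (auto intro!: derivative_eq_intros)

lemma sd_sum: "(\<And>i. i \<in> I \<Longrightarrow> sd N (A i) (A' i) t) \<Longrightarrow> sd N (\<lambda>s. \<Sum>i\<in>I. A i s) (\<Sum>i\<in>I. A' i) t"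
  unfolding sd_def fps_sum_nth by (auto intro!: has_vector_derivative_sum)

lemma sd_const: "sd N (\<lambda>s. C) 0 t"
  unfolding sd_def by (auto intro!: derivative_eq_intros)

lemma sd_fconst: "((\<lambda>s. f s) has_vector_derivative f') (at t) \<Longrightarrow> sd N (\<lambda>s. fps_const (f s)) (fps_const f') t"
  unfolding sd_def by (auto simp: fps_nth_fps_const intro!: derivative_eq_intros)

lemma sd_X: "sd N A A' t \<Longrightarrow> sd (Suc N) (\<lambda>s. fps_X * A s) (fps_X * A') t"
  unfolding sd_def fps_X_mult_nth
proof (intro allI impI)
  fix j assume h: "\<forall>j<N. ((\<lambda>s. A s $ j) has_vector_derivative A' $ j) (at t)" and j: "j < Suc N"
  show "((\<lambda>s. if j = 0 then 0 else A s $ (j - 1)) has_vector_derivative (if j = 0 then 0 else A' $ (j - 1))) (at t)"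
    using h j by (cases j) (auto intro!: derivative_eq_intros)
qed

lemma sd_mult: "sd N A A' t \<Longrightarrow> sd N B B' t \<Longrightarrow> sd N (\<lambda>s. A s * B s) (A' * B t + A t * B') t"
  unfolding sd_def
proof (intro allI impI)
  fix j assume hA: "\<forall>j<N. ((\<lambda>s. A s $ j) has_vector_derivative A' $ j) (at t)"
    and hB: "\<forall>j<N. ((\<lambda>s. B s $ j) has_vector_derivative B' $ j) (at t)" and j: "j < N"
  have "((\<lambda>s. \<Sum>i=0..j. A s $ i * B s $ (j - i)) has_vector_derivative
          (\<Sum>i=0..j. A t $ i * B' $ (j - i) + A' $ i * B t $ (j - i))) (at t)"
    using hA hB j by (auto intro!: has_vector_derivative_sum has_vector_derivative_mult)
  moreover have "(\<Sum>i=0..j. A t $ i * B' $ (j - i) + A' $ i * B t $ (j - i)) = (A' * B t + A t * B') $ j"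
    by (simp add: fps_mult_nth sum.distrib add.commute)
  ultimately show "((\<lambda>s. (A s * B s) $ j) has_vector_derivative (A' * B t + A t * B') $ j) (at t)"
    by (simp add: fps_mult_nth)
qed





lemma Pser0: "Pser S Sb v n $ 0 = 1" by (simp add: Pser_def Fc_eq)

lemma fps_to_fls_sum: "fps_to_fls (sum f A) = (\<Sum>x\<in>A. fps_to_fls (f x))"
  by (induct A rule: infinite_finite_induct) simp_all

lemma fls_const_add: "fls_const (a + b) = fls_const a + fls_const (b::'a::comm_monoid_add)"
  by (intro fls_eqI) simp

lemma fls_const_diff: "fls_const (a - b) = fls_const a - fls_const (b::'a::ab_group_add)"
  by (intro fls_eqI) simp

lemma fls_const_sum: "fls_const (sum f A) = (\<Sum>x\<in>A. fls_const (f x))"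
  by (induct A rule: infinite_finite_induct) (simp_all add: fls_const_add)

lemma fls_const_div: "fls_const ((a::complex) / b) = fls_const a * fls_const (inverse b)"
  by (simp add: divide_inverse)

lemma fls_hf: "2 * fls_const (inverse (2::complex)) = 1"
  by (metis fls_const_1 fls_const_mult_const fls_const_numeral right_inverse zero_neq_numeral)

lemma fls_ii: "fls_const \<i> * fls_const \<i> = (-1 :: complex fls)"
  by simp

lemma fls_inv_c: "(x::complex) \<noteq> 0 \<Longrightarrow> fls_const x * fls_const (inverse x) = 1"
  by simp

lemma fls_XX: "fls_X * fls_X_inv = (1::complex fls)"
  by (metis fls_X_nonzero fls_inverse_X right_inverse)

lemma fps_to_fls_1: "fps_to_fls 1 = 1" by simp

lemmas nrm = fps_to_fls_1 fps_to_fls_plus fps_to_fls_minus fps_to_fls_uminus fls_times_fps_to_fls fps_const_to_fls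
  fps_X_to_fls fps_to_fls_sum fls_const_add fls_const_diff fls_const_uminus fls_const_mult_const[symmetric]
  fls_const_div fls_const_1 fls_const_numeral

locale yo =
  fixes S Sb S' Sb' :: "int \<Rightarrow> real \<Rightarrow> complex^'m"
    and v v' :: "int \<Rightarrow> real \<Rightarrow> complex"
    and c :: complex and t :: real
  assumes dS: "\<And>n t. (S n has_vector_derivative S' n t) (at t)"
      and dSb: "\<And>n t. (Sb n has_vector_derivative Sb' n t) (at t)"
      and dv: "\<And>n t. (v n has_vector_derivative v' n t) (at t)"
      and eqS: "\<And>n t. \<i> *s S' n t = v n t *s (S (n+1) t + S (n-1) t) - c *s S n t"
      and eqSb: "\<And>n t. \<i> *s Sb' n t = - (v n t *s (Sb (n+1) t + Sb (n-1) t)) + c *s Sb n t"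
      and eqv: "\<And>n t. v' n t = 1/2 * v n t *
                  ((bip (S (n+1) t) (Sb n t) + bip (S n t) (Sb (n+1) t))
                   - (bip (S n t) (Sb (n-1) t) + bip (S (n-1) t) (Sb n t)))"
      and vnz: "\<And>n t. v n t \<noteq> 0"
begin

definition "Pf n s = Pser (\<lambda>k. S k s) (\<lambda>k. Sb k s) (\<lambda>k. v k s) n"
definition "Gf n k s = Gs (\<lambda>k. S k s) (\<lambda>k. Sb k s) (\<lambda>k. v k s) n k"
definition "Hf n k s = Hs (\<lambda>k. S k s) (\<lambda>k. Sb k s) (\<lambda>k. v k s) n k"
definition "It n = inverse (Pf n t)"
definition "g n k = Gf n k t * It n"
definition "h n k = Hf n k t * It n"
definition "b n = (\<Sum>k\<in>UNIV. fps_const (S n t $ k) * g n k + h n k * fps_const (Sb n t $ k))"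
definition "A n = fps_const \<i> * (b n - b (n-1)) - fps_const (v' n t / v n t)"
definition "PD n = Pf n t * A n"
definition "gD n k = fps_const (\<i> * v (n+1) t) * (Pf (n+1) t * It n * (g (n+1) k - fps_const (\<i>/2 * Sb n t $ k)))
   + fps_X * fps_const (1/2 * v n t * v (n+1) t * Sb (n-1) t $ k) * Pf (n+1) t
   - fps_const (\<i> * c) * g n k + fps_X * fps_const (\<i> * v n t * v (n+1) t) * Pf (n+1) t * g n k"
definition "hD n k = - fps_const (\<i> * v (n+1) t) * (Pf (n+1) t * It n * (h (n+1) k - fps_const (\<i>/2 * S n t $ k)))
   + fps_X * fps_const (1/2 * v n t * v (n+1) t * S (n-1) t $ k) * Pf (n+1) t
   + fps_const (\<i> * c) * h n k + fps_X * fps_const (\<i> * v n t * v (n+1) t) * Pf (n+1) t * h n k"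
definition "GD n k = PD n * g n k + Pf n t * gD n k"
definition "HD n k = PD n * h n k + Pf n t * hD n k"

lemma PI: "Pf n t * It n = 1"
  unfolding It_def Pf_def by (rule inverse_mult_eq_1') (simp add: Pser0)

lemma G_eq: "Gf n k t = Pf n t * g n k"
  using PI[of n] unfolding g_def by (metis mult.commute mult.left_commute mult_1_right)
lemma H_eq: "Hf n k t = Pf n t * h n k"
  using PI[of n] unfolding h_def by (metis mult.commute mult.left_commute mult_1_right)

lemma BG_eq: "BG (\<lambda>k. S k t) (\<lambda>k. Sb k t) (\<lambda>k. v k t) n = Pf n t * b n"
  unfolding BG_def b_def sum_distrib_left
  by (rule sum.cong) (auto simp: G_eq[unfolded Gf_def] H_eq[unfolded Hf_def] algebra_simps)

lemma R1t: "Pf n t = 1 + fps_X * (fps_X * (fps_const (v n t * v (n+1) t) * (Pf n t * Pf (n+1) t)) + Pf n t * b n)"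
  using R1[of "\<lambda>k. S k t" "\<lambda>k. Sb k t" "\<lambda>k. v k t" n] unfolding BG_eq by (simp add: Pf_def)

lemma L2: "It n = 1 - fps_X * (fps_X * (fps_const (v n t * v (n+1) t) * Pf (n+1) t)) - fps_X * b n"
  using R1t[of n] PI[of n] by algebra

lemma L3: "g n k = fps_const (- \<i>/2 * Sb (n+1) t $ k)
    + fps_X * (fps_const (v (n+1) t) * (Pf (n+1) t * g (n+1) k))
    - fps_X * (fps_const (\<i>/2 * v (n+1) t * Sb n t $ k) * Pf (n+1) t)"
  using R2[of "\<lambda>k. S k t" "\<lambda>k. Sb k t" "\<lambda>k. v k t" n k] G_eq[of n k] G_eq[of "n+1" k] PI[of n]
  unfolding Gf_def Pf_def[symmetric] by algebra

lemma L4: "h n k = fps_const (- \<i>/2 * S (n+1) t $ k)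
    - fps_X * (fps_const (v (n+1) t) * (Pf (n+1) t * h (n+1) k))
    + fps_X * (fps_const (\<i>/2 * v (n+1) t * S n t $ k) * Pf (n+1) t)"
  using R3[of "\<lambda>k. S k t" "\<lambda>k. Sb k t" "\<lambda>k. v k t" n k] H_eq[of n k] H_eq[of "n+1" k] PI[of n]
  unfolding Hf_def Pf_def[symmetric] by algebra


lemma PIF: "fps_to_fls (Pf n t) * fps_to_fls (It n) = 1"
  using arg_cong[OF PI[of n], of fps_to_fls] by (simp only: nrm fps_to_fls_eq_1_iff)

lemma L2F: "fps_to_fls (It n) = 1 - fls_X * (fls_X * (fls_const (v n t) * fls_const (v (n+1) t) * fps_to_fls (Pf (n+1) t))) - fls_X * fps_to_fls (b n)"
  by (subst L2[of n]) (simp only: nrm, (algebra)?)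

lemma L3F: "fps_to_fls (g n k) = - (fls_const \<i> * fls_const (inverse 2) * fls_const (Sb (n+1) t $ k))
    + fls_X * (fls_const (v (n+1) t) * (fps_to_fls (Pf (n+1) t) * fps_to_fls (g (n+1) k)))
    - fls_X * (fls_const \<i> * fls_const (inverse 2) * fls_const (v (n+1) t) * fls_const (Sb n t $ k) * fps_to_fls (Pf (n+1) t))"
  by (subst L3[of n k]) (simp only: nrm, (algebra)?)


lemma L4F: "fps_to_fls (h n k) = - (fls_const \<i> * fls_const (inverse 2) * fls_const (S (n+1) t $ k))
    - fls_X * (fls_const (v (n+1) t) * (fps_to_fls (Pf (n+1) t) * fps_to_fls (h (n+1) k)))
    + fls_X * (fls_const \<i> * fls_const (inverse 2) * fls_const (v (n+1) t) * fls_const (S n t $ k) * fps_to_fls (Pf (n+1) t))"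
  by (subst L4[of n k]) (simp only: nrm, (algebra)?)

lemma L5: "fps_to_fls (gD n k) = - fls_const (inverse 2) * fls_X_inv * fps_to_fls (It n) * fls_const (Sb (n+1) t $ k)
   + fls_const (inverse 2) * (fls_X * fls_const (v n t) * fls_const (v (n+1) t) * fps_to_fls (Pf (n+1) t)) * fls_const (Sb (n-1) t $ k)
   + (fls_const \<i> * (fls_X_inv - fps_to_fls (b n)) - fls_const \<i> * fls_const c) * fps_to_fls (g n k)"
  unfolding gD_def using L3F[of n k] L2F[of n] PIF[of n] fls_XX fls_ii fls_hf
  by (simp only: nrm) algebra

lemma L6: "fps_to_fls (hD n k) = - fls_const (inverse 2) * fls_X_inv * fps_to_fls (It n) * fls_const (S (n+1) t $ k)
   + fls_const (inverse 2) * (fls_X * fls_const (v n t) * fls_const (v (n+1) t) * fps_to_fls (Pf (n+1) t)) * fls_const (S (n-1) t $ k)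
   + (fls_const \<i> * (fls_X_inv - fps_to_fls (b n)) + fls_const \<i> * fls_const c) * fps_to_fls (h n k)"
  unfolding hD_def using L4F[of n k] L2F[of n] PIF[of n] fls_XX fls_ii fls_hf
  by (simp only: nrm) algebra


lemma Scomp: "S' n t $ k = - \<i> * (v n t * (S (n+1) t $ k + S (n-1) t $ k) - c * S n t $ k)"
proof -
  have h: "\<i> * S' n t $ k = v n t * (S (n+1) t $ k + S (n-1) t $ k) - c * S n t $ k"
    using arg_cong[OF eqS[of n t], of "\<lambda>x. x $ k"] by (simp add: algebra_simps)
  have "S' n t $ k = - \<i> * (\<i> * S' n t $ k)" by (simp add: mult.assoc[symmetric])
  then show ?thesis using h by simp
qed

lemma Sbcomp: "Sb' n t $ k = - \<i> * (- (v n t * (Sb (n+1) t $ k + Sb (n-1) t $ k)) + c * Sb n t $ k)"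
proof -
  have h: "\<i> * Sb' n t $ k = - (v n t * (Sb (n+1) t $ k + Sb (n-1) t $ k)) + c * Sb n t $ k"
    using arg_cong[OF eqSb[of n t], of "\<lambda>x. x $ k"] by (simp add: algebra_simps)
  have "Sb' n t $ k = - \<i> * (\<i> * Sb' n t $ k)" by (simp add: mult.assoc[symmetric])
  then show ?thesis using h by simp
qed

definition "ef n = (\<Sum>k\<in>UNIV. fls_const (S (n+1) t $ k) * fls_const (Sb n t $ k) + fls_const (S n t $ k) * fls_const (Sb (n+1) t $ k))"
definition "Xp n = (\<Sum>k\<in>UNIV. fls_const (S (n+1) t $ k) * fps_to_fls (g n k) - fps_to_fls (h n k) * fls_const (Sb (n+1) t $ k))"
definition "Xm n = (\<Sum>k\<in>UNIV. fls_const (S (n-1) t $ k) * fps_to_fls (g n k) - fps_to_fls (h n k) * fls_const (Sb (n-1) t $ k))"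
definition "bD n = (\<Sum>k\<in>UNIV. fls_const (S' n t $ k) * fps_to_fls (g n k) + fls_const (S n t $ k) * fps_to_fls (gD n k)
     + fps_to_fls (hD n k) * fls_const (Sb n t $ k) + fps_to_fls (h n k) * fls_const (Sb' n t $ k))"

lemma bF: "fps_to_fls (b n) = (\<Sum>k\<in>UNIV. fls_const (S n t $ k) * fps_to_fls (g n k) + fps_to_fls (h n k) * fls_const (Sb n t $ k))"
  unfolding b_def by (simp only: nrm)

lemma AF: "fps_to_fls (A n) = fls_const \<i> * (fps_to_fls (b n) - fps_to_fls (b (n-1))) - fls_const (v' n t) * fls_const (inverse (v n t))"
  unfolding A_def by (simp only: nrm)

lemma XpL: "Xp n = fls_X * fls_const (v (n+1) t) * fps_to_fls (Pf (n+1) t) * fps_to_fls (b (n+1))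
   - fls_const \<i> * fls_const (inverse 2) * fls_X * fls_const (v (n+1) t) * fps_to_fls (Pf (n+1) t) * ef n"
proof -
  have "Xp n = (\<Sum>k\<in>UNIV. fls_X * fls_const (v (n+1) t) * fps_to_fls (Pf (n+1) t) *
       (fls_const (S (n+1) t $ k) * fps_to_fls (g (n+1) k) + fps_to_fls (h (n+1) k) * fls_const (Sb (n+1) t $ k))
     - fls_const \<i> * fls_const (inverse 2) * fls_X * fls_const (v (n+1) t) * fps_to_fls (Pf (n+1) t) *
       (fls_const (S (n+1) t $ k) * fls_const (Sb n t $ k) + fls_const (S n t $ k) * fls_const (Sb (n+1) t $ k)))"
    unfolding Xp_def
    apply (rule sum.cong[OF refl])
    subgoal for k by (subst L3F[of n k], subst L4F[of n k], algebra)
    done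
  also have "\<dots> = fls_X * fls_const (v (n+1) t) * fps_to_fls (Pf (n+1) t) * fps_to_fls (b (n+1))
   - fls_const \<i> * fls_const (inverse 2) * fls_X * fls_const (v (n+1) t) * fps_to_fls (Pf (n+1) t) * ef n"
    unfolding bF ef_def by (simp only: sum.distrib sum_subtractf sum_distrib_left[symmetric], (algebra)?)
  finally show ?thesis .
qed

lemma XmL: "fls_X * fls_const (v n t) * fps_to_fls (Pf n t) * Xm n = fps_to_fls (b (n-1)) + fls_const \<i> * fls_const (inverse 2) * ef (n-1)"
proof -
  have e: "n - 1 + 1 = n" by simp
  have "fls_X * fls_const (v n t) * fps_to_fls (Pf n t) * Xm n = (\<Sum>k\<in>UNIV.
       (fls_const (S (n-1) t $ k) * fps_to_fls (g (n-1) k) + fps_to_fls (h (n-1) k) * fls_const (Sb (n-1) t $ k))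
     + fls_const \<i> * fls_const (inverse 2) *
       (fls_const (S n t $ k) * fls_const (Sb (n-1) t $ k) + fls_const (S (n-1) t $ k) * fls_const (Sb n t $ k)))"
    unfolding Xm_def sum_distrib_left
    apply (rule sum.cong[OF refl])
    subgoal for k by (subst L3F[of "n-1" k], subst L4F[of "n-1" k], simp only: e, algebra)
    done
  also have "\<dots> = fps_to_fls (b (n-1)) + fls_const \<i> * fls_const (inverse 2) * ef (n-1)"
    unfolding bF ef_def e by (simp only: sum.distrib sum_subtractf sum_distrib_left[symmetric], (algebra)?)
  finally show ?thesis .
qed

lemma bDL: "bD n = - fls_const (inverse 2) * fls_X_inv * fps_to_fls (It n) * ef n
   + fls_const (inverse 2) * (fls_X * fls_const (v n t) * fls_const (v (n+1) t) * fps_to_fls (Pf (n+1) t)) * ef (n-1)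
   + fls_const \<i> * (fls_X_inv - fps_to_fls (b n)) * fps_to_fls (b n)
   - fls_const \<i> * fls_const (v n t) * Xp n - fls_const \<i> * fls_const (v n t) * Xm n"
proof -
  have e: "n - 1 + 1 = n" by simp
  have "bD n = (\<Sum>k\<in>UNIV. - fls_const (inverse 2) * fls_X_inv * fps_to_fls (It n) *
          (fls_const (S (n+1) t $ k) * fls_const (Sb n t $ k) + fls_const (S n t $ k) * fls_const (Sb (n+1) t $ k))
   + fls_const (inverse 2) * (fls_X * fls_const (v n t) * fls_const (v (n+1) t) * fps_to_fls (Pf (n+1) t)) *
          (fls_const (S n t $ k) * fls_const (Sb (n-1) t $ k) + fls_const (S (n-1) t $ k) * fls_const (Sb n t $ k))
   + fls_const \<i> * (fls_X_inv - fps_to_fls (b n)) *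
          (fls_const (S n t $ k) * fps_to_fls (g n k) + fps_to_fls (h n k) * fls_const (Sb n t $ k))
   - fls_const \<i> * fls_const (v n t) *
          (fls_const (S (n+1) t $ k) * fps_to_fls (g n k) - fps_to_fls (h n k) * fls_const (Sb (n+1) t $ k))
   - fls_const \<i> * fls_const (v n t) *
          (fls_const (S (n-1) t $ k) * fps_to_fls (g n k) - fps_to_fls (h n k) * fls_const (Sb (n-1) t $ k)))"
    unfolding bD_def
    apply (rule sum.cong[OF refl])
    subgoal for k by (subst L5[of n k], subst L6[of n k], subst Scomp[of n k], subst Sbcomp[of n k], simp only: nrm, algebra)
    done
  also have "\<dots> = - fls_const (inverse 2) * fls_X_inv * fps_to_fls (It n) * ef n
   + fls_const (inverse 2) * (fls_X * fls_const (v n t) * fls_const (v (n+1) t) * fps_to_fls (Pf (n+1) t)) * ef (n-1)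
   + fls_const \<i> * (fls_X_inv - fps_to_fls (b n)) * fps_to_fls (b n)
   - fls_const \<i> * fls_const (v n t) * Xp n - fls_const \<i> * fls_const (v n t) * Xm n"
    unfolding bF ef_def e Xp_def Xm_def
    by (simp only: sum.distrib sum_subtractf sum_distrib_left[symmetric], (algebra)?)
  finally show ?thesis .
qed

lemma dvL: "fls_const (v' n t) = fls_const (inverse 2) * fls_const (v n t) * (ef n - ef (n-1))"
proof -
  have e: "n - 1 + 1 = n" by simp
  show ?thesis
    by (subst eqv) (simp only: nrm bip_def fls_const_sum ef_def e sum.distrib, algebra)
qed

end



context yo begin

lemma fps_to_fls_0': "fps_to_fls 0 = (0::complex fls)" by simp

lemma e1: "n + 1 - 1 = (n::int)" by simp

lemma SbF: "fls_const (Sb' n t $ k) = - fls_const \<i> * (- (fls_const (v n t) * (fls_const (Sb (n+1) t $ k) + fls_const (Sb (n-1) t $ k))) + fls_const c * fls_const (Sb n t $ k))"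
  by (subst Sbcomp) (simp only: nrm)

lemma SF: "fls_const (S' n t $ k) = - fls_const \<i> * (fls_const (v n t) * (fls_const (S (n+1) t $ k) + fls_const (S (n-1) t $ k)) - fls_const c * fls_const (S n t $ k))"
  by (subst Scomp) (simp only: nrm)

lemma core2: "GD n k = (fps_const (- \<i>/2 * Sb' (n+1) t $ k) * Pf n t + fps_const (- \<i>/2 * Sb (n+1) t $ k) * PD n)
   + fps_X * (fps_const (v' (n+1) t) * (Pf n t * Gf (n+1) k t) + fps_const (v (n+1) t) * (PD n * Gf (n+1) k t + Pf n t * GD (n+1) k))
   - fps_X * (fps_const (\<i>/2 * v (n+1) t * Sb' n t $ k + \<i>/2 * v' (n+1) t * Sb n t $ k) * (Pf n t * Pf (n+1) t)
        + fps_const (\<i>/2 * v (n+1) t * Sb n t $ k) * (PD n * Pf (n+1) t + Pf n t * PD (n+1)))"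
  apply (subst fps_to_fls_eq_iff[symmetric])
  unfolding GD_def PD_def G_eq[of "n+1" k]
  apply (simp only: nrm L5[of n k] L5[of "n+1" k, unfolded e1] AF[of "n+1", unfolded e1] SbF[of n k] SbF[of "n+1" k, unfolded e1])
  apply (simp only: L3F[of n k] L2F[of n])
  using L2F[of "n+1"] PIF[of "n+1"] fls_XX fls_ii fls_hf fls_inv_c[OF vnz[of "n+1" t]]
  by algebra


lemma core3: "HD n k = (fps_const (- \<i>/2 * S' (n+1) t $ k) * Pf n t + fps_const (- \<i>/2 * S (n+1) t $ k) * PD n)
   - fps_X * (fps_const (v' (n+1) t) * (Pf n t * Hf (n+1) k t) + fps_const (v (n+1) t) * (PD n * Hf (n+1) k t + Pf n t * HD (n+1) k))
   + fps_X * (fps_const (\<i>/2 * v (n+1) t * S' n t $ k + \<i>/2 * v' (n+1) t * S n t $ k) * (Pf n t * Pf (n+1) t)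
        + fps_const (\<i>/2 * v (n+1) t * S n t $ k) * (PD n * Pf (n+1) t + Pf n t * PD (n+1)))"
  apply (subst fps_to_fls_eq_iff[symmetric])
  unfolding HD_def PD_def H_eq[of "n+1" k]
  apply (simp only: nrm L6[of n k] L6[of "n+1" k, unfolded e1] AF[of "n+1", unfolded e1] SF[of n k] SF[of "n+1" k, unfolded e1])
  apply (simp only: L4F[of n k] L2F[of n])
  using L2F[of "n+1"] PIF[of "n+1"] fls_XX fls_ii fls_hf fls_inv_c[OF vnz[of "n+1" t]]
  by algebra

definition "bDf n = (\<Sum>k\<in>UNIV. fps_const (S' n t $ k) * g n k + fps_const (S n t $ k) * gD n k
     + hD n k * fps_const (Sb n t $ k) + h n k * fps_const (Sb' n t $ k))"

lemma bDfF: "fps_to_fls (bDf n) = bD n"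
  by (simp only: bDf_def bD_def nrm)

lemma sumD: "(\<Sum>k\<in>UNIV. (fps_const (S' n t $ k) * Gf n k t + fps_const (S n t $ k) * GD n k)
      + (HD n k * fps_const (Sb n t $ k) + Hf n k t * fps_const (Sb' n t $ k))) = PD n * b n + Pf n t * bDf n"
proof -
  have "(\<Sum>k\<in>UNIV. (fps_const (S' n t $ k) * Gf n k t + fps_const (S n t $ k) * GD n k)
      + (HD n k * fps_const (Sb n t $ k) + Hf n k t * fps_const (Sb' n t $ k)))
     = (\<Sum>k\<in>UNIV. PD n * (fps_const (S n t $ k) * g n k + h n k * fps_const (Sb n t $ k))
        + Pf n t * (fps_const (S' n t $ k) * g n k + fps_const (S n t $ k) * gD n k
     + hD n k * fps_const (Sb n t $ k) + h n k * fps_const (Sb' n t $ k)))"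
    by (rule sum.cong[OF refl]) (simp only: G_eq H_eq GD_def HD_def, algebra)
  also have "\<dots> = PD n * b n + Pf n t * bDf n"
    by (simp only: b_def bDf_def sum_distrib_left[symmetric] sum.distrib)
  finally show ?thesis .
qed

lemma core1: "PD n = 0 + fps_X * (fps_X * (fps_const (v n t * v' (n+1) t + v' n t * v (n+1) t) * (Pf n t * Pf (n+1) t)
      + fps_const (v n t * v (n+1) t) * (PD n * Pf (n+1) t + Pf n t * PD (n+1)))
   + (\<Sum>k\<in>UNIV. (fps_const (S' n t $ k) * Gf n k t + fps_const (S n t $ k) * GD n k)
      + (HD n k * fps_const (Sb n t $ k) + Hf n k t * fps_const (Sb' n t $ k))))"
  unfolding sumD
  apply (subst fps_to_fls_eq_iff[symmetric])
  unfolding PD_def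
  apply (simp only: nrm fps_to_fls_0' bDfF bDL[of n] AF[of n] AF[of "n+1", unfolded e1] XpL[of n] dvL[of n])
  apply (simp only: L2F[of n])
  using XmL[of n] PIF[of n, unfolded L2F[of n]] fls_XX fls_ii fls_hf fls_inv_c[OF vnz[of "n+1" t]] fls_inv_c[OF vnz[of n t]]
  by algebra

end



context yo begin

lemma dvn: "((\<lambda>s. v n s) has_vector_derivative v' n t) (at t)"
  by (rule dv)

lemma dSk: "((\<lambda>s. S n s $ k) has_vector_derivative S' n t $ k) (at t)"
  by (rule bounded_linear.has_vector_derivative[OF bounded_linear_vec_nth dS])

lemma dSbk: "((\<lambda>s. Sb n s $ k) has_vector_derivative Sb' n t $ k) (at t)"
  by (rule bounded_linear.has_vector_derivative[OF bounded_linear_vec_nth dSb])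

lemma d_vv: "((\<lambda>s. v n s * v (n+1) s) has_vector_derivative (v n t * v' (n+1) t + v' n t * v (n+1) t)) (at t)"
  by (rule has_vector_derivative_mult[OF dvn dvn])

lemma d_c1: "((\<lambda>s. - \<i>/2 * Sb (n+1) s $ k) has_vector_derivative (- \<i>/2 * Sb' (n+1) t $ k)) (at t)"
  by (rule has_vector_derivative_mult_right[OF dSbk])
lemma d_c1': "((\<lambda>s. - \<i>/2 * S (n+1) s $ k) has_vector_derivative (- \<i>/2 * S' (n+1) t $ k)) (at t)"
  by (rule has_vector_derivative_mult_right[OF dSk])

lemma d_c3: "((\<lambda>s. \<i>/2 * v (n+1) s * Sb n s $ k) has_vector_derivative (\<i>/2 * v (n+1) t * Sb' n t $ k + \<i>/2 * v' (n+1) t * Sb n t $ k)) (at t)"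
  by (rule has_vector_derivative_mult[OF has_vector_derivative_mult_right[OF dvn] dSbk])
lemma d_c3': "((\<lambda>s. \<i>/2 * v (n+1) s * S n s $ k) has_vector_derivative (\<i>/2 * v (n+1) t * S' n t $ k + \<i>/2 * v' (n+1) t * S n t $ k)) (at t)"
  by (rule has_vector_derivative_mult[OF has_vector_derivative_mult_right[OF dvn] dSk])

lemma eqP: "Pf n s = 1 + fps_X * (fps_X * (fps_const (v n s * v (n+1) s) * (Pf n s * Pf (n+1) s))
   + (\<Sum>k\<in>UNIV. fps_const (S n s $ k) * Gf n k s + Hf n k s * fps_const (Sb n s $ k)))"
  using R1[of "\<lambda>k. S k s" "\<lambda>k. Sb k s" "\<lambda>k. v k s" n] unfolding BG_def Pf_def Gf_def Hf_def .

lemma eqG: "Gf n k s = fps_const (- \<i>/2 * Sb (n+1) s $ k) * Pf n s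
    + fps_X * (fps_const (v (n+1) s) * (Pf n s * Gf (n+1) k s))
    - fps_X * (fps_const (\<i>/2 * v (n+1) s * Sb n s $ k) * (Pf n s * Pf (n+1) s))"
  using R2[of "\<lambda>k. S k s" "\<lambda>k. Sb k s" "\<lambda>k. v k s" n k] unfolding Pf_def Gf_def .

lemma eqH: "Hf n k s = fps_const (- \<i>/2 * S (n+1) s $ k) * Pf n s
    - fps_X * (fps_const (v (n+1) s) * (Pf n s * Hf (n+1) k s))
    + fps_X * (fps_const (\<i>/2 * v (n+1) s * S n s $ k) * (Pf n s * Pf (n+1) s))"
  using R3[of "\<lambda>k. S k s" "\<lambda>k. Sb k s" "\<lambda>k. v k s" n k] unfolding Pf_def Hf_def .

lemma sd_main: "\<forall>n. sd N (Pf n) (PD n) t \<and> (\<forall>k. sd N (Gf n k) (GD n k) t) \<and> (\<forall>k. sd N (Hf n k) (HD n k) t)"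
proof (induction N)
  case 0 then show ?case by (simp add: sd_0)
next
  case (Suc N)
  have IP: "\<And>n. sd N (Pf n) (PD n) t" and IG: "\<And>n k. sd N (Gf n k) (GD n k) t"
    and IH: "\<And>n k. sd N (Hf n k) (HD n k) t" using Suc.IH by auto
  have P: "sd (Suc N) (Pf n) (PD n) t" for n
  proof -
    have a: "sd N (\<lambda>s. fps_X * (fps_const (v n s * v (n+1) s) * (Pf n s * Pf (n+1) s)))
       (fps_X * (fps_const (v n t * v' (n+1) t + v' n t * v (n+1) t) * (Pf n t * Pf (n+1) t)
      + fps_const (v n t * v (n+1) t) * (PD n * Pf (n+1) t + Pf n t * PD (n+1)))) t"
      by (rule sd_mono[OF sd_X[OF sd_mult[OF sd_fconst[OF d_vv] sd_mult[OF IP IP]]]]) simp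
    have b: "sd N (\<lambda>s. \<Sum>k\<in>UNIV. fps_const (S n s $ k) * Gf n k s + Hf n k s * fps_const (Sb n s $ k))
       (\<Sum>k\<in>UNIV. (fps_const (S' n t $ k) * Gf n k t + fps_const (S n t $ k) * GD n k)
      + (HD n k * fps_const (Sb n t $ k) + Hf n k t * fps_const (Sb' n t $ k))) t"
      by (rule sd_sum, rule sd_add[OF sd_mult[OF sd_fconst[OF dSk] IG] sd_mult[OF IH sd_fconst[OF dSbk]]])
    have c: "sd (Suc N) (\<lambda>s. 1 + fps_X * (fps_X * (fps_const (v n s * v (n+1) s) * (Pf n s * Pf (n+1) s))
   + (\<Sum>k\<in>UNIV. fps_const (S n s $ k) * Gf n k s + Hf n k s * fps_const (Sb n s $ k))))
     (0 + fps_X * (fps_X * (fps_const (v n t * v' (n+1) t + v' n t * v (n+1) t) * (Pf n t * Pf (n+1) t)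
      + fps_const (v n t * v (n+1) t) * (PD n * Pf (n+1) t + Pf n t * PD (n+1)))
   + (\<Sum>k\<in>UNIV. (fps_const (S' n t $ k) * Gf n k t + fps_const (S n t $ k) * GD n k)
      + (HD n k * fps_const (Sb n t $ k) + Hf n k t * fps_const (Sb' n t $ k))))) t"
      by (rule sd_add[OF sd_const sd_X[OF sd_add[OF a b]]])
    show ?thesis by (rule sd_cong[OF c]) (simp only: eqP[symmetric], simp only: core1[symmetric])
  qed
  have G: "sd (Suc N) (Gf n k) (GD n k) t" for n k
  proof -
    have c: "sd (Suc N) (\<lambda>s. fps_const (- \<i>/2 * Sb (n+1) s $ k) * Pf n s
    + fps_X * (fps_const (v (n+1) s) * (Pf n s * Gf (n+1) k s))
    - fps_X * (fps_const (\<i>/2 * v (n+1) s * Sb n s $ k) * (Pf n s * Pf (n+1) s)))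
      ((fps_const (- \<i>/2 * Sb' (n+1) t $ k) * Pf n t + fps_const (- \<i>/2 * Sb (n+1) t $ k) * PD n)
   + fps_X * (fps_const (v' (n+1) t) * (Pf n t * Gf (n+1) k t) + fps_const (v (n+1) t) * (PD n * Gf (n+1) k t + Pf n t * GD (n+1) k))
   - fps_X * (fps_const (\<i>/2 * v (n+1) t * Sb' n t $ k + \<i>/2 * v' (n+1) t * Sb n t $ k) * (Pf n t * Pf (n+1) t)
        + fps_const (\<i>/2 * v (n+1) t * Sb n t $ k) * (PD n * Pf (n+1) t + Pf n t * PD (n+1)))) t"
      by (rule sd_diff[OF sd_add[OF sd_mult[OF sd_fconst[OF d_c1] P] sd_X[OF sd_mult[OF sd_fconst[OF dvn] sd_mult[OF IP IG]]]]
             sd_X[OF sd_mult[OF sd_fconst[OF d_c3] sd_mult[OF IP IP]]]])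
    show ?thesis by (rule sd_cong[OF c]) (simp only: eqG[symmetric], simp only: core2[symmetric])
  qed
  have H: "sd (Suc N) (Hf n k) (HD n k) t" for n k
  proof -
    have c: "sd (Suc N) (\<lambda>s. fps_const (- \<i>/2 * S (n+1) s $ k) * Pf n s
    - fps_X * (fps_const (v (n+1) s) * (Pf n s * Hf (n+1) k s))
    + fps_X * (fps_const (\<i>/2 * v (n+1) s * S n s $ k) * (Pf n s * Pf (n+1) s)))
      ((fps_const (- \<i>/2 * S' (n+1) t $ k) * Pf n t + fps_const (- \<i>/2 * S (n+1) t $ k) * PD n)
   - fps_X * (fps_const (v' (n+1) t) * (Pf n t * Hf (n+1) k t) + fps_const (v (n+1) t) * (PD n * Hf (n+1) k t + Pf n t * HD (n+1) k))
   + fps_X * (fps_const (\<i>/2 * v (n+1) t * S' n t $ k + \<i>/2 * v' (n+1) t * S n t $ k) * (Pf n t * Pf (n+1) t)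
        + fps_const (\<i>/2 * v (n+1) t * S n t $ k) * (PD n * Pf (n+1) t + Pf n t * PD (n+1)))) t"
      by (rule sd_add[OF sd_diff[OF sd_mult[OF sd_fconst[OF d_c1'] P] sd_X[OF sd_mult[OF sd_fconst[OF dvn] sd_mult[OF IP IH]]]]
             sd_X[OF sd_mult[OF sd_fconst[OF d_c3'] sd_mult[OF IP IP]]]])
    show ?thesis by (rule sd_cong[OF c]) (simp only: eqH[symmetric], simp only: core3[symmetric])
  qed
  show ?case using P G H by blast
qed

end



lemma X_shift: "P $ 0 = c \<Longrightarrow> fps_X * fps_shift 1 P = P - fps_const (c::complex)"
  by (intro fps_ext) simp

lemma sd_shift: "sd (Suc N) A A' t \<Longrightarrow> sd N (\<lambda>s. fps_shift 1 (A s)) (fps_shift 1 A') t"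
  unfolding sd_def by simp

lemma sd_deriv: "sd (Suc N) A A' t \<Longrightarrow> sd N (\<lambda>s. fps_deriv (A s)) (fps_deriv A') t"
  unfolding sd_def by (auto intro!: has_vector_derivative_mult_right)

lemma inv_rec: "P $ 0 = 1 \<Longrightarrow> inverse P = 1 - fps_X * (fps_shift 1 P * inverse (P :: complex fps))"
proof -
  assume h: "P $ 0 = 1"
  have a: "fps_X * fps_shift 1 P = P - 1" using X_shift[OF h] by simp
  have b: "P * inverse P = 1" by (rule inverse_mult_eq_1') (simp add: h)
  show ?thesis using a b by algebra
qed

lemma Lder: "P $ 0 = 1 \<Longrightarrow> fps_deriv (fps_ln 1 oo (P - 1)) = fps_deriv P * inverse (P :: complex fps)"
proof -
  assume h: "P $ 0 = 1"
  have b0: "(P - 1) $ 0 = 0" using h by simp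
  have "fps_deriv (fps_ln 1 oo (P - 1)) = (fps_deriv (fps_ln 1) oo (P - 1)) * fps_deriv (P - 1)"
    by (rule fps_compose_deriv[OF b0])
  also have "fps_deriv (fps_ln 1) oo (P - 1) = inverse ((1 + fps_X) oo (P - 1))"
    unfolding fps_ln_deriv by (simp add: fps_inverse_compose[OF b0])
  also have "(1 + fps_X) oo (P - 1) = P"
    by (simp add: fps_compose_add_distrib fps_X_fps_compose_startby0[OF b0])
  finally show ?thesis by (simp add: mult.commute)
qed

context yo begin

lemma PDall: "sd N (Pf n) (PD n) t" using sd_main by blast

lemma PD0: "PD n $ 0 = 0" by (subst core1) simp

lemma Pf0: "Pf n s $ 0 = 1" by (simp add: Pf_def Pser0)

lemma sd_inv: "sd N (\<lambda>s. inverse (Pf n s)) (- (PD n * It n * It n)) t"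
proof (induction N)
  case 0 then show ?case by (rule sd_0)
next
  case (Suc N)
  have c: "sd (Suc N) (\<lambda>s. 1 - fps_X * (fps_shift 1 (Pf n s) * inverse (Pf n s)))
     (0 - fps_X * (fps_shift 1 (PD n) * inverse (Pf n t) + fps_shift 1 (Pf n t) * (- (PD n * It n * It n)))) t"
    by (rule sd_diff[OF sd_const sd_X[OF sd_mult[OF sd_shift[OF PDall] Suc.IH]]])
  have e1: "fps_X * fps_shift 1 (PD n) = PD n" using X_shift[OF PD0[of n]] by simp
  have e2: "fps_X * fps_shift 1 (Pf n t) = Pf n t - 1" using X_shift[OF Pf0[of n t]] by simp
  show ?case
  proof (rule sd_cong[OF c])
    show "1 - fps_X * (fps_shift 1 (Pf n s) * inverse (Pf n s)) = inverse (Pf n s)" for s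
      using inv_rec[OF Pf0[of n s]] by simp
    show "0 - fps_X * (fps_shift 1 (PD n) * inverse (Pf n t) + fps_shift 1 (Pf n t) * (- (PD n * It n * It n)))
        = - (PD n * It n * It n)"
    proof -
      have "0 - fps_X * (fps_shift 1 (PD n) * inverse (Pf n t) + fps_shift 1 (Pf n t) * (- (PD n * It n * It n)))
          = - ((fps_X * fps_shift 1 (PD n)) * It n) + (fps_X * fps_shift 1 (Pf n t)) * (PD n * It n * It n)"
        unfolding It_def by (simp add: algebra_simps)
      also have "\<dots> = - (PD n * It n) + (Pf n t - 1) * (PD n * It n * It n)" unfolding e1 e2 ..
      also have "(Pf n t - 1) * (PD n * It n * It n) = PD n * It n * (Pf n t * It n) - PD n * It n * It n"
        by (simp add: algebra_simps)
      also have "\<dots> = PD n * It n - PD n * It n * It n" using PI[of n] by simp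
      finally show ?thesis by simp
    qed
  qed
qed

lemma Aeq: "A n = PD n * It n"
  using PI[of n] unfolding PD_def by algebra

lemma log_deriv: "((\<lambda>s. logP (\<lambda>k. S k s) (\<lambda>k. Sb k s) (\<lambda>k. v k s) n $ j) has_vector_derivative A n $ j) (at t)"
proof (cases j)
  case 0
  have "A n $ 0 = 0" unfolding Aeq by (simp add: PD0)
  then show ?thesis using 0 by (simp add: logP_def fps_ln_nth)
next
  case (Suc i)
  have L: "logP (\<lambda>k. S k s) (\<lambda>k. Sb k s) (\<lambda>k. v k s) n $ Suc i
      = (fps_deriv (Pf n s) * inverse (Pf n s)) $ i / of_nat (Suc i)" for s
  proof -
    have "fps_deriv (logP (\<lambda>k. S k s) (\<lambda>k. Sb k s) (\<lambda>k. v k s) n) = fps_deriv (Pf n s) * inverse (Pf n s)"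
      unfolding logP_def Pf_def[symmetric] by (rule Lder[OF Pf0])
    then have "of_nat (Suc i) * logP (\<lambda>k. S k s) (\<lambda>k. Sb k s) (\<lambda>k. v k s) n $ Suc i
         = (fps_deriv (Pf n s) * inverse (Pf n s)) $ i"
      by (metis fps_deriv_nth plus_1_eq_Suc add.commute)
    then show ?thesis by (simp add: field_simps del: of_nat_Suc)
  qed
  have d: "((\<lambda>s. (fps_deriv (Pf n s) * inverse (Pf n s)) $ i) has_vector_derivative
      (fps_deriv (PD n) * inverse (Pf n t) + fps_deriv (Pf n t) * (- (PD n * It n * It n))) $ i) (at t)"
    using sd_mult[OF sd_deriv[OF PDall] sd_inv, of "Suc i" n] unfolding sd_def by simp
  have fa: "fps_deriv (A n) = fps_deriv (PD n) * inverse (Pf n t) + fps_deriv (Pf n t) * (- (PD n * It n * It n))"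
  proof -
    have "fps_deriv (It n) = - fps_deriv (Pf n t) * (It n)\<^sup>2"
      unfolding It_def by (rule fps_inverse_deriv) (simp add: Pf0)
    then show ?thesis unfolding Aeq fps_deriv_mult It_def[symmetric] by (simp add: power2_eq_square algebra_simps)
  qed
  have "A n $ Suc i = fps_deriv (A n) $ i / of_nat (Suc i)"
    by (simp add: fps_deriv_nth field_simps del: of_nat_Suc)
  then have "A n $ Suc i = (fps_deriv (PD n) * inverse (Pf n t) + fps_deriv (Pf n t) * (- (PD n * It n * It n))) $ i / of_nat (Suc i)"
    unfolding fa .
  then show ?thesis unfolding Suc L
    using has_vector_derivative_mult_left[OF d, of "inverse (of_nat (Suc i))"]
    by (simp add: divide_inverse)
qed

lemma Jdiff: "Jser (\<lambda>k. S k t) (\<lambda>k. Sb k t) (\<lambda>k. v k t) (n+1) - Jser (\<lambda>k. S k t) (\<lambda>k. Sb k t) (\<lambda>k. v k t) n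
   = fls_const \<i> * (fps_to_fls (b n) - fps_to_fls (b (n-1)))"
proof -
  have e: "n - 1 + 1 = n" by simp
  have i1: "fps_to_fls (inverse (Pf n t)) = fps_to_fls (It n)" by (simp add: It_def)
  show ?thesis
    unfolding Jser_def Pf_def[symmetric] e1
    apply (simp only: nrm i1 It_def[symmetric])
    using L2F[of n] L2F[of "n-1", unfolded e] fls_XX by algebra
qed

lemma main: "\<exists>D :: complex fps.
           (\<forall>j. ((\<lambda>s. logP (\<lambda>k. S k s) (\<lambda>k. Sb k s) (\<lambda>k. v k s) n $ j)
                   has_vector_derivative D $ j) (at t))
         \<and> fls_const (v' n t / v n t) + fps_to_fls D
             = Jser (\<lambda>k. S k t) (\<lambda>k. Sb k t) (\<lambda>k. v k t) (n+1)
               - Jser (\<lambda>k. S k t) (\<lambda>k. Sb k t) (\<lambda>k. v k t) n"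
proof (intro exI conjI allI)
  show "((\<lambda>s. logP (\<lambda>k. S k s) (\<lambda>k. Sb k s) (\<lambda>k. v k s) n $ j) has_vector_derivative A n $ j) (at t)" for j
    by (rule log_deriv)
  show "fls_const (v' n t / v n t) + fps_to_fls (A n) = Jser (\<lambda>k. S k t) (\<lambda>k. Sb k t) (\<lambda>k. v k t) (n+1)
               - Jser (\<lambda>k. S k t) (\<lambda>k. Sb k t) (\<lambda>k. v k t) n"
    unfolding Jdiff AF by (simp only: fls_const_div) algebra
qed

end

theorem proposition3p1:
  fixes S Sb S' Sb' :: "int \<Rightarrow> real \<Rightarrow> complex^'m"
    and v v' :: "int \<Rightarrow> real \<Rightarrow> complex"
    and c :: complex
  assumes dS: "\<And>n t. (S n has_vector_derivative S' n t) (at t)"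
      and dSb: "\<And>n t. (Sb n has_vector_derivative Sb' n t) (at t)"
      and dv: "\<And>n t. (v n has_vector_derivative v' n t) (at t)"
      and eqS: "\<And>n t. \<i> *s S' n t = v n t *s (S (n+1) t + S (n-1) t) - c *s S n t"
      and eqSb: "\<And>n t. \<i> *s Sb' n t = - (v n t *s (Sb (n+1) t + Sb (n-1) t)) + c *s Sb n t"
      and eqv: "\<And>n t. v' n t = 1/2 * v n t *
                  ((bip (S (n+1) t) (Sb n t) + bip (S n t) (Sb (n+1) t))
                   - (bip (S n t) (Sb (n-1) t) + bip (S (n-1) t) (Sb n t)))"
      and vnz: "\<And>n t. v n t \<noteq> 0"
  shows "\<exists>D :: complex fps.
           (\<forall>j. ((\<lambda>s. logP (\<lambda>k. S k s) (\<lambda>k. Sb k s) (\<lambda>k. v k s) n $ j)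
                   has_vector_derivative D $ j) (at t))
         \<and> fls_const (v' n t / v n t) + fps_to_fls D
             = Jser (\<lambda>k. S k t) (\<lambda>k. Sb k t) (\<lambda>k. v k t) (n+1)
               - Jser (\<lambda>k. S k t) (\<lambda>k. Sb k t) (\<lambda>k. v k t) n"
proof -
  interpret yo S Sb S' Sb' v v' c t
    by unfold_locales (fact assms)+
  show ?thesis by (rule main)
qed

end
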